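(* Let $\mathcal S=\{s_1,\dots,s_k\}\subseteq\Sigma^n$ be a set of pairwise matching strings and let $s^*\in\Sigma^n$ be a string matching every string of $\mathcal S$. Then for every $i\in[1..k]$, $\partial_S(s^*,s_i) = \partial_{Ham}(h_{s_1,s^*}, h_{s_1,s_i})$.
   Context: The swap at position $p$ exchanges the letters at positions $p$ and $p+1$. A swap permutation is a set of swaps at positions pairwise differing by at least $2$. Two strings of length $n$ are matching if some swap permutation transforms one into the other. For matching strings $u,v$, there is a unique valid swap permutation (one never swapping two identical letters) from $u$ to $v$; $h_{u,v}$ is its swap string, the binary string of length $n-1$ with $h_{u,v}[p]=1$ iff it swaps $(p,p+1)$. The swap distance $\partial_S(u,v)$ is $+\infty$ if $u,v$ are not matching, and otherwise the number of swaps in the valid swap permutation from $u$ to $v$ (the number of $1$s in $h_{u,v}$). $\partial_{Ham}$ is the Hamming distance. *)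

theory Defs
  imports Main "HOL-Library.Extended_Nat"
begin

text \<open>Strings are lists; positions are 0-based. A swap at position p exchanges
the letters at positions p and p+1 (so p + 1 < n).\<close>

definition swap_perm :: "nat \<Rightarrow> nat set \<Rightarrow> bool" where
  "swap_perm n P \<longleftrightarrow> (\<forall>p\<in>P. Suc p < n) \<and>
     (\<forall>p\<in>P. \<forall>q\<in>P. p \<noteq> q \<longrightarrow> p + 2 \<le> q \<or> q + 2 \<le> p)"

definition apply_swaps :: "nat set \<Rightarrow> 'a list \<Rightarrow> 'a list" where
  "apply_swaps P u = map (\<lambda>i. if i \<in> P then u ! Suc i
        else if 0 < i \<and> i - 1 \<in> P then u ! (i - 1) else u ! i) [0..<length u]"

definition matching :: "'a list \<Rightarrow> 'a list \<Rightarrow> bool" where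
  "matching u v \<longleftrightarrow> length u = length v \<and>
     (\<exists>P. swap_perm (length u) P \<and> apply_swaps P u = v)"

definition valid_swap_perm :: "'a list \<Rightarrow> 'a list \<Rightarrow> nat set \<Rightarrow> bool" where
  "valid_swap_perm u v P \<longleftrightarrow> length u = length v \<and> swap_perm (length u) P \<and>
     apply_swaps P u = v \<and> (\<forall>p\<in>P. u ! p \<noteq> u ! Suc p)"

definition the_valid_swap_perm :: "'a list \<Rightarrow> 'a list \<Rightarrow> nat set" where
  "the_valid_swap_perm u v = (THE P. valid_swap_perm u v P)"

definition swap_string :: "'a list \<Rightarrow> 'a list \<Rightarrow> bool list" where
  "swap_string u v = map (\<lambda>p. p \<in> the_valid_swap_perm u v) [0..<length u - 1]"

definition hamming :: "'b list \<Rightarrow> 'b list \<Rightarrow> nat" where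
  "hamming xs ys = card {i. i < length xs \<and> xs ! i \<noteq> ys ! i}"

definition swap_dist :: "'a list \<Rightarrow> 'a list \<Rightarrow> enat" where
  "swap_dist u v = (if matching u v then enat (card (the_valid_swap_perm u v)) else \<infinity>)"

end

theory Submission
  imports Defs
begin

inductive VS :: "'a list \<Rightarrow> 'a list \<Rightarrow> nat set \<Rightarrow> bool" where
  VNil: "VS [] [] {}"
| VKeep: "VS us vs P \<Longrightarrow> VS (a#us) (a#vs) (Suc ` P)"
| VSwap: "a \<noteq> b \<Longrightarrow> VS us vs P \<Longrightarrow> VS (a#b#us) (b#a#vs) (insert 0 (Suc ` Suc ` P))"

lemma VS_nil1: "VS [] x A \<Longrightarrow> x = [] \<and> A = {}"
  by (auto elim: VS.cases)

lemma VS_same: "VS (a#us) (a#xs) P \<Longrightarrow> \<exists>P'. P = Suc ` P' \<and> VS us xs P'"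
  by (cases rule: VS.cases) auto

lemma VS_diff: "VS (a#us) (b#xs) P \<Longrightarrow> a \<noteq> b \<Longrightarrow>
   \<exists>us' xs' P'. us = b#us' \<and> xs = a#xs' \<and> P = insert 0 (Suc ` Suc ` P') \<and> VS us' xs' P'"
  by (cases rule: VS.cases) auto

lemma VS_len: "VS u v P \<Longrightarrow> length u = length v"
  by (induction rule: VS.induct) auto

lemma VS_sym: "VS u v P \<Longrightarrow> VS v u P"
  by (induction rule: VS.induct) (auto intro: VS.intros)

lemma VS_nonempty: "VS u x A \<Longrightarrow> u = a#us \<Longrightarrow> \<exists>x0 xs. x = x0#xs"
  by (cases rule: VS.cases) auto

lemma sd1: "Suc`((A-B)\<union>(B-A)) = (Suc`A - Suc`B) \<union> (Suc`B - Suc`A)" by auto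
lemma sd2: "insert 0 (Suc`Suc`((A-B)\<union>(B-A))) = (Suc`Suc`A - insert 0 (Suc`Suc`B)) \<union> (insert 0 (Suc`Suc`B) - Suc`Suc`A)" by auto
lemma sd3: "insert 0 (Suc`Suc`((A-B)\<union>(B-A))) = (insert 0 (Suc`Suc`A) - Suc`Suc`B) \<union> (Suc`Suc`B - insert 0 (Suc`Suc`A))" by auto
lemma sd4: "Suc`Suc`((A-B)\<union>(B-A)) = (insert 0 (Suc`Suc`A) - insert 0 (Suc`Suc`B)) \<union> (insert 0 (Suc`Suc`B) - insert 0 (Suc`Suc`A))" by auto

lemma triple:
  "length u = N \<Longrightarrow> VS u x A \<Longrightarrow> VS u w B \<Longrightarrow> VS x w C \<Longrightarrow> C = (A - B) \<union> (B - A)"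
proof (induction N arbitrary: u x w A B C rule: less_induct)
  case (less N u x w A B C)
  note IH = less.IH
  note l = less.prems(1) and hA = less.prems(2) and hB = less.prems(3) and hC = less.prems(4)
  show ?case
  proof -
    show "C = (A - B) \<union> (B - A)"
    proof (cases u)
      case Nil
      then show ?thesis using hA hB hC VS_nil1 by blast
    next
      case (Cons a us)
      obtain x0 xs where x: "x = x0#xs" using VS_nonempty[OF hA Cons] by blast
      obtain w0 ws where w: "w = w0#ws" using VS_nonempty[OF hB Cons] by blast
      show ?thesis
      proof (cases "x0 = a")
        case True
        then obtain A' where A': "A = Suc ` A'" "VS us xs A'" using VS_same[of a us xs A] hA Cons x True by blast
        show ?thesis
        proof (cases "w0 = a")
          case True
          then obtain B' where B': "B = Suc ` B'" "VS us ws B'" using VS_same[of a us ws B] hB Cons w True by blast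
          obtain C' where C': "C = Suc ` C'" "VS xs ws C'" using VS_same[of a xs ws C] hC x w True \<open>x0 = a\<close> by blast
          have "C' = (A' - B') \<union> (B' - A')" by (rule IH[OF _ refl A'(2) B'(2) C'(2)]) (use l Cons in simp)
          then show ?thesis unfolding A'(1) B'(1) C'(1) by (simp only: sd1)
        next
          case False
          then obtain us' ws' B' where B': "us = w0#us'" "ws = a#ws'" "B = insert 0 (Suc ` Suc ` B')" "VS us' ws' B'"
            using VS_diff[of a us w0 ws B] hB Cons w False by auto
          obtain xs' C' where xs': "xs = w0#xs'" and C': "C = insert 0 (Suc ` Suc ` C')" "VS xs' ws' C'"
            using VS_diff[of a xs w0 "a#ws'" C] hC x w B'(2) \<open>x0 = a\<close> False by auto
          obtain A'' where A'': "A' = Suc ` A''" "VS us' xs' A''"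
            using VS_same[of w0 us' xs' A'] A'(2) B'(1) xs' by auto
          have "C' = (A'' - B') \<union> (B' - A'')" by (rule IH[OF _ refl A''(2) B'(4) C'(2)]) (use l Cons B'(1) in simp)
          then show ?thesis unfolding A'(1) A''(1) B'(3) C'(1) by (simp only: sd2)
        qed
      next
        case False
        then obtain us' xs' A' where A': "us = x0#us'" "xs = a#xs'" "A = insert 0 (Suc ` Suc ` A')" "VS us' xs' A'"
          using VS_diff[of a us x0 xs A] hA Cons x False by auto
        show ?thesis
        proof (cases "w0 = a")
          case True
          then obtain B' where B': "B = Suc ` B'" "VS us ws B'" using VS_same[of a us ws B] hB Cons w True by blast
          obtain ws' C' where ws': "ws = x0#ws'" and C': "C = insert 0 (Suc ` Suc ` C')" "VS xs' ws' C'"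
            using VS_diff[of x0 "a#xs'" a ws C] hC x w A'(2) True False by auto
          obtain B'' where B'': "B' = Suc ` B''" "VS us' ws' B''"
            using VS_same[of x0 us' ws' B'] B'(2) A'(1) ws' by auto
          have "C' = (A' - B'') \<union> (B'' - A')" by (rule IH[OF _ refl A'(4) B''(2) C'(2)]) (use l Cons A'(1) in simp)
          then show ?thesis unfolding A'(3) B'(1) B''(1) C'(1) by (simp only: sd3)
        next
          case False
          then obtain us'' ws' B' where B': "us = w0#us''" "ws = a#ws'" "B = insert 0 (Suc ` Suc ` B')" "VS us'' ws' B'"
            using VS_diff[of a us w0 ws B] hB Cons w False by auto
          have eq: "w0 = x0" "us'' = us'" using A'(1) B'(1) by auto
          obtain C1 where C1: "C = Suc ` C1" "VS (a#xs') (a#ws') C1" using VS_same[of x0 "a#xs'" "a#ws'" C] hC x w eq A' B' by auto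
          obtain C' where C': "C1 = Suc ` C'" "VS xs' ws' C'" using VS_same[of a xs' ws' C1] C1(2) by blast
          have "C' = (A' - B') \<union> (B' - A')" by (rule IH[OF _ refl A'(4) B'(4)[unfolded eq] C'(2)]) (use l Cons A'(1) in simp)
          then show ?thesis unfolding A'(3) B'(3) C1(1) C'(1) by (simp only: sd4)
        qed
      qed
    qed
  qed
qed


lemma as_len[simp]: "length (apply_swaps P u) = length u"
  by (simp add: apply_swaps_def)

lemma as_nth: "i < length u \<Longrightarrow> apply_swaps P u ! i =
   (if i \<in> P then u ! Suc i else if 0 < i \<and> i - 1 \<in> P then u ! (i - 1) else u ! i)"
  by (cases i) (auto simp: apply_swaps_def simp del: upt_Suc)

lemma apply_keep: "0 \<notin> P \<Longrightarrow> apply_swaps P (a#us) = a # apply_swaps {p. Suc p \<in> P} us"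
  apply (rule nth_equalityI)
   apply simp
  subgoal for i
    apply (cases i)
     apply (simp add: as_nth)
    subgoal for j
      using as_nth[of "Suc j" "a#us" P] as_nth[of j us "{p. Suc p \<in> P}"]
      by (cases j) auto
    done
  done

lemma apply_swap: "0 \<in> P \<Longrightarrow> Suc 0 \<notin> P \<Longrightarrow> apply_swaps P (a#b#us) = b # a # apply_swaps {p. Suc (Suc p) \<in> P} us"
  apply (rule nth_equalityI)
   apply simp
  subgoal for i
    apply (cases i)
     apply (simp add: as_nth)
    subgoal for j
      apply (cases j)
       apply (simp add: as_nth)
      subgoal for k
        using as_nth[of "Suc (Suc k)" "a#b#us" P] as_nth[of k us "{p. Suc (Suc p) \<in> P}"]
        by (cases k) auto
      done
    done
  done

lemma VS_valid: "VS u v P \<Longrightarrow> valid_swap_perm u v P"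
proof (induction rule: VS.induct)
  case VNil
  then show ?case by (simp add: valid_swap_perm_def swap_perm_def apply_swaps_def)
next
  case (VKeep us vs P a)
  have e: "{p. Suc p \<in> Suc ` P} = P" by auto
  have ap: "apply_swaps (Suc ` P) (a#us) = a # apply_swaps P us"
    using apply_keep[of "Suc ` P" a us] e by auto
  show ?case using VKeep ap
    by (auto simp: valid_swap_perm_def swap_perm_def)
next
  case (VSwap a b us vs P)
  have e: "{p. Suc (Suc p) \<in> insert 0 (Suc ` Suc ` P)} = P" by auto
  have ap: "apply_swaps (insert 0 (Suc ` Suc ` P)) (a#b#us) = b # a # apply_swaps P us"
    using apply_swap[of "insert 0 (Suc ` Suc ` P)" a b us] e by auto
  show ?case using VSwap ap
    by (auto simp: valid_swap_perm_def swap_perm_def)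
qed


lemma VS_apply:
  "length u = N \<Longrightarrow> swap_perm (length u) P \<Longrightarrow>
   VS u (apply_swaps P u) {p\<in>P. u ! p \<noteq> u ! Suc p}"
proof (induction N arbitrary: u P rule: less_induct)
  case (less N u P)
  show ?case
  proof (cases u)
    case Nil
    then have "P = {}" using less.prems by (auto simp: swap_perm_def)
    then show ?thesis using Nil by (simp add: apply_swaps_def VS.VNil)
  next
    case (Cons a us)
    show ?thesis
    proof (cases "0 \<in> P")
      case False
      define P1 where "P1 = {p. Suc p \<in> P}"
      have sp: "swap_perm (length us) P1" using less.prems(2) Cons
        by (auto simp: swap_perm_def P1_def)
      have ih: "VS us (apply_swaps P1 us) {p\<in>P1. us ! p \<noteq> us ! Suc p}"
        using less.IH[of "length us" us P1] sp less.prems(1) Cons by simp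
      have e: "{p\<in>P. u ! p \<noteq> u ! Suc p} = Suc ` {p\<in>P1. us ! p \<noteq> us ! Suc p}"
      proof (intro set_eqI iffI)
        fix p assume p: "p \<in> {p\<in>P. u ! p \<noteq> u ! Suc p}"
        then obtain q where "p = Suc q" using False by (cases p) auto
        then show "p \<in> Suc ` {p\<in>P1. us ! p \<noteq> us ! Suc p}" using p Cons by (auto simp: P1_def)
      next
        fix p assume "p \<in> Suc ` {p\<in>P1. us ! p \<noteq> us ! Suc p}"
        then show "p \<in> {p\<in>P. u ! p \<noteq> u ! Suc p}" using Cons by (auto simp: P1_def)
      qed
      show ?thesis using apply_keep[OF False, of a us] VS.VKeep[OF ih, of a] Cons e
        by (simp add: P1_def)
    next
      case True
      then have "Suc 0 < length u" using less.prems(2) by (auto simp: swap_perm_def)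
      then obtain b us' where us: "us = b # us'" using Cons by (cases us) auto
      have n1: "Suc 0 \<notin> P" using True less.prems(2) by (force simp: swap_perm_def)
      define P2 where "P2 = {p. Suc (Suc p) \<in> P}"
      have sp: "swap_perm (length us') P2" using less.prems(2) Cons us
        by (auto simp: swap_perm_def P2_def)
      have ih: "VS us' (apply_swaps P2 us') {p\<in>P2. us' ! p \<noteq> us' ! Suc p}"
        using less.IH[of "length us'" us' P2] sp less.prems(1) Cons us by simp
      have ap: "apply_swaps P u = b # a # apply_swaps P2 us'"
        using apply_swap[OF True n1, of a b us'] Cons us by (simp add: P2_def)
      show ?thesis
      proof (cases "a = b")
        case True
        have e: "{p\<in>P. u ! p \<noteq> u ! Suc p} = Suc ` Suc ` {p\<in>P2. us' ! p \<noteq> us' ! Suc p}"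
        proof (intro set_eqI iffI)
          fix p assume p: "p \<in> {p\<in>P. u ! p \<noteq> u ! Suc p}"
          have "p \<noteq> 0" using p True Cons us by (cases p) auto
          moreover have "p \<noteq> Suc 0" using p n1 by auto
          ultimately obtain q where "p = Suc (Suc q)" by (metis not0_implies_Suc)
          then show "p \<in> Suc ` Suc ` {p\<in>P2. us' ! p \<noteq> us' ! Suc p}" using p Cons us by (auto simp: P2_def)
        next
          fix p assume "p \<in> Suc ` Suc ` {p\<in>P2. us' ! p \<noteq> us' ! Suc p}"
          then show "p \<in> {p\<in>P. u ! p \<noteq> u ! Suc p}" using Cons us by (auto simp: P2_def)
        qed
        have "VS (a # b # us') (b # a # apply_swaps P2 us') (Suc ` Suc ` {p\<in>P2. us' ! p \<noteq> us' ! Suc p})"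
          using VS.VKeep[OF VS.VKeep[OF ih, of a], of a] True by simp
        then show ?thesis using ap e Cons us by simp
      next
        case False
        have e: "{p\<in>P. u ! p \<noteq> u ! Suc p} = insert 0 (Suc ` Suc ` {p\<in>P2. us' ! p \<noteq> us' ! Suc p})"
        proof (intro set_eqI iffI)
          fix p assume p: "p \<in> {p\<in>P. u ! p \<noteq> u ! Suc p}"
          show "p \<in> insert 0 (Suc ` Suc ` {p\<in>P2. us' ! p \<noteq> us' ! Suc p})"
          proof (cases "p = 0")
            case False
            moreover have "p \<noteq> Suc 0" using p n1 by auto
            ultimately obtain q where "p = Suc (Suc q)" by (metis not0_implies_Suc)
            then show ?thesis using p Cons us by (auto simp: P2_def)
          qed simp
        next
          fix p assume "p \<in> insert 0 (Suc ` Suc ` {p\<in>P2. us' ! p \<noteq> us' ! Suc p})"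
          then show "p \<in> {p\<in>P. u ! p \<noteq> u ! Suc p}" using Cons us \<open>0 \<in> P\<close> False by (auto simp: P2_def)
        qed
        show ?thesis using VS.VSwap[OF False ih] ap e Cons us by simp
      qed
    qed
  qed
qed

lemma VS_det: "VS u v P \<Longrightarrow> VS u v Q \<Longrightarrow> P = Q"
proof (induction arbitrary: Q rule: VS.induct)
  case VNil
  have "Q = {}" using VS_nil1[OF VNil.prems] by simp
  then show ?case by simp
next
  case (VKeep us vs P a)
  obtain Q' where "Q = Suc ` Q'" "VS us vs Q'" using VS_same[OF VKeep.prems] by blast
  then show ?case using VKeep.IH by simp
next
  case (VSwap a b us vs P)
  obtain us' xs' Q' where "b # us = b # us'" "a # vs = a # xs'" "Q = insert 0 (Suc ` Suc ` Q')" "VS us' xs' Q'"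
    using VS_diff[OF VSwap.prems VSwap.hyps(1)] by blast
  then show ?case using VSwap.IH by simp
qed

lemma matching_VS: "matching u v \<Longrightarrow> \<exists>P. VS u v P"
proof -
  assume "matching u v"
  then obtain P where "swap_perm (length u) P" "apply_swaps P u = v" unfolding matching_def by blast
  then show ?thesis using VS_apply[OF refl, of u P] by auto
qed

lemma the_vsp: "VS u v P \<Longrightarrow> the_valid_swap_perm u v = P"
  unfolding the_valid_swap_perm_def
proof (rule the_equality)
  assume "VS u v P"
  then show "valid_swap_perm u v P" by (rule VS_valid)
next
  fix Q assume a: "VS u v P" "valid_swap_perm u v Q"
  then have "{p\<in>Q. u ! p \<noteq> u ! Suc p} = Q" "swap_perm (length u) Q" "apply_swaps Q u = v"
    by (auto simp: valid_swap_perm_def)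
  then have "VS u v Q" using VS_apply[OF refl, of u Q] by simp
  then show "Q = P" using VS_det[OF a(1)] by simp
qed

lemma VS_matching: "VS u v P \<Longrightarrow> matching u v"
proof -
  assume "VS u v P"
  then have "valid_swap_perm u v P" by (rule VS_valid)
  then show ?thesis unfolding valid_swap_perm_def matching_def by blast
qed


lemma VS_bound: "VS u v P \<Longrightarrow> p \<in> P \<Longrightarrow> Suc p < length u"
  using VS_valid unfolding valid_swap_perm_def swap_perm_def by blast

theorem mainTheorem3:
  fixes s :: "nat \<Rightarrow> 'a list" and sstar :: "'a list" and n k :: nat
  assumes len: "\<forall>i\<in>{1..k}. length (s i) = n"
    and lenstar: "length sstar = n"
    and pairwise: "\<forall>i\<in>{1..k}. \<forall>j\<in>{1..k}. matching (s i) (s j)"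
    and star: "\<forall>i\<in>{1..k}. matching sstar (s i)"
  shows "\<forall>i\<in>{1..k}. swap_dist sstar (s i) =
           enat (hamming (swap_string (s 1) sstar) (swap_string (s 1) (s i)))"
proof
  fix i assume i: "i \<in> {1..k}"
  then have one: "1 \<in> {1..k}" by auto
  obtain A0 where "VS sstar (s 1) A0" using matching_VS star one by blast
  then have hA: "VS (s 1) sstar A0" by (rule VS_sym)
  obtain B where hB: "VS (s 1) (s i) B" using matching_VS pairwise one i by blast
  obtain C where hC: "VS sstar (s i) C" using matching_VS star i by blast
  have CAB: "C = (A0 - B) \<union> (B - A0)" by (rule triple[OF refl hA hB hC])
  have l1: "length (s 1) = n" using len one by blast
  have d: "swap_dist sstar (s i) = enat (card C)"
    using VS_matching[OF hC] the_vsp[OF hC] by (simp add: swap_dist_def)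
  have sa: "swap_string (s 1) sstar = map (\<lambda>p. p \<in> A0) [0..<n - 1]"
    using the_vsp[OF hA] l1 by (simp add: swap_string_def)
  have sb: "swap_string (s 1) (s i) = map (\<lambda>p. p \<in> B) [0..<n - 1]"
    using the_vsp[OF hB] l1 by (simp add: swap_string_def)
  have "{j. j < length (map (\<lambda>p. p \<in> A0) [0..<n - 1]) \<and>
          map (\<lambda>p. p \<in> A0) [0..<n - 1] ! j \<noteq> map (\<lambda>p. p \<in> B) [0..<n - 1] ! j} = C"
  proof (intro set_eqI iffI)
    fix j assume "j \<in> {j. j < length (map (\<lambda>p. p \<in> A0) [0..<n - 1]) \<and>
          map (\<lambda>p. p \<in> A0) [0..<n - 1] ! j \<noteq> map (\<lambda>p. p \<in> B) [0..<n - 1] ! j}"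
    then show "j \<in> C" using CAB by auto
  next
    fix j assume j: "j \<in> C"
    then have "j \<in> A0 \<or> j \<in> B" using CAB by auto
    then have "Suc j < n" using VS_bound[OF hA] VS_bound[OF hB] l1 by auto
    then show "j \<in> {j. j < length (map (\<lambda>p. p \<in> A0) [0..<n - 1]) \<and>
          map (\<lambda>p. p \<in> A0) [0..<n - 1] ! j \<noteq> map (\<lambda>p. p \<in> B) [0..<n - 1] ! j}"
      using j CAB by auto
  qed
  then have "hamming (swap_string (s 1) sstar) (swap_string (s 1) (s i)) = card C"
    unfolding hamming_def sa sb by simp
  then show "swap_dist sstar (s i) =
           enat (hamming (swap_string (s 1) sstar) (swap_string (s 1) (s i)))" using d by simp
qed

end
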